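(* Let $\alpha\neq0$ be real, let $\mathbf{u}=(u_1,u_2)$ and $\mathbf{v}=(-u_1,u_2)$ be constant unit vectors with $u_1u_2\neq0$, and let $\mathbf{f}\in C_c^2(S^1;\mathbb{D})$. Then $\mathbf{f}$ can be recovered (in particular, is uniquely determined) from $\mathcal{L}_\alpha\mathbf{f}$ and $\mathcal{T}_\alpha\mathbf{f}$.
   Context: $\mathbb{D}$ is the open unit disc in $\mathbb{R}^2$; $C_c^2(S^1;\mathbb{D})$ is the space of $C^2$ vector fields with compact support in $\mathbb{D}$. $\mathbf{a}^\perp=(-a_2,a_1)$. $\mathcal{L}_\alpha\mathbf{f}(\mathbf{x})=-\int_0^\infty\mathbf{u}\cdot\mathbf{f}(\mathbf{x}+t\mathbf{u})\,dt+\alpha\int_0^\infty\mathbf{v}\cdot\mathbf{f}(\mathbf{x}+t\mathbf{v})\,dt$ and $\mathcal{T}_\alpha\mathbf{f}(\mathbf{x})=-\int_0^\infty\mathbf{u}^\perp\cdot\mathbf{f}(\mathbf{x}+t\mathbf{u})\,dt+\alpha\int_0^\infty\mathbf{v}^\perp\cdot\mathbf{f}(\mathbf{x}+t\mathbf{v})\,dt$. *)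

theory Defs
  imports "HOL-Analysis.Analysis"
begin

definition perp :: "real^2 \<Rightarrow> real^2" where
  "perp a = vector [- (a $ 2), a $ 1]"

definition C2_field :: "(real^2 \<Rightarrow> real^2) \<Rightarrow> bool" where
  "C2_field f \<longleftrightarrow>
     (\<exists>f' :: real^2 \<Rightarrow> ((real^2) \<Rightarrow>\<^sub>L (real^2)).
      \<exists>f'' :: real^2 \<Rightarrow> ((real^2) \<Rightarrow>\<^sub>L ((real^2) \<Rightarrow>\<^sub>L (real^2))).
        (\<forall>x. (f has_derivative blinfun_apply (f' x)) (at x)) \<and>
        (\<forall>x. (f' has_derivative blinfun_apply (f'' x)) (at x)) \<and>
        continuous_on UNIV f'')"

definition Cc2_disc :: "(real^2 \<Rightarrow> real^2) \<Rightarrow> bool" where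
  "Cc2_disc f \<longleftrightarrow> C2_field f \<and> compact (closure {x. f x \<noteq> 0}) \<and>
     closure {x. f x \<noteq> 0} \<subseteq> ball 0 1"

definition L_op :: "real \<Rightarrow> real^2 \<Rightarrow> real^2 \<Rightarrow> (real^2 \<Rightarrow> real^2) \<Rightarrow> real^2 \<Rightarrow> real" where
  "L_op \<alpha> u v f x =
     - integral {0..} (\<lambda>t. u \<bullet> f (x + t *\<^sub>R u))
     + \<alpha> * integral {0..} (\<lambda>t. v \<bullet> f (x + t *\<^sub>R v))"

definition T_op :: "real \<Rightarrow> real^2 \<Rightarrow> real^2 \<Rightarrow> (real^2 \<Rightarrow> real^2) \<Rightarrow> real^2 \<Rightarrow> real" where
  "T_op \<alpha> u v f x =
     - integral {0..} (\<lambda>t. perp u \<bullet> f (x + t *\<^sub>R u))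
     + \<alpha> * integral {0..} (\<lambda>t. perp v \<bullet> f (x + t *\<^sub>R v))"

end

theory Submission imports Defs "HOL-Complex_Analysis.Conformal_Mappings" begin

lemma X_deriv:
  fixes h :: "real^2 \<Rightarrow> real^2" and h' :: "real^2 \<Rightarrow> ((real^2) \<Rightarrow>\<^sub>L (real^2))"
  assumes hd: "\<And>x. (h has_derivative blinfun_apply (h' x)) (at x)"
    and hc: "continuous_on UNIV h'"
  shows "((\<lambda>x. integral {0..2} (\<lambda>t. h (x + t *\<^sub>R w))) has_derivative
           blinfun_apply (integral {0..2} (\<lambda>t. h' (x + t *\<^sub>R w)))) (at x)"
proof -
  have ch: "continuous_on UNIV h" using hd
    by (meson continuous_on_eq_continuous_within has_derivative_continuous)
  have "((\<lambda>x. integral (cbox 0 2) (\<lambda>t. h (x + t *\<^sub>R w))) has_derivative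
           blinfun_apply (integral (cbox 0 2) (\<lambda>t. h' (x + t *\<^sub>R w)))) (at x within UNIV)"
  proof (rule leibniz_rule[where f="\<lambda>x t. h (x + t *\<^sub>R w)" and fx="\<lambda>x t. h' (x + t *\<^sub>R w)"])
    fix x t
    show "((\<lambda>x. h (x + t *\<^sub>R w)) has_derivative blinfun_apply (h' (x + t *\<^sub>R w))) (at x within UNIV)"
      using has_derivative_compose[OF has_derivative_add[OF has_derivative_ident has_derivative_const] hd]
      by (simp add: o_def)
  next
    fix x :: "real^2"
    show "(\<lambda>t. h (x + t *\<^sub>R w)) integrable_on cbox 0 2"
      by (intro integrable_continuous continuous_on_compose2[OF ch] continuous_intros) auto
  next
    show "continuous_on (UNIV \<times> cbox 0 2) (\<lambda>(x, t). h' (x + t *\<^sub>R w))"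
      unfolding split_beta by (intro continuous_on_compose2[OF hc] continuous_intros) auto
  qed auto
  then show ?thesis by simp
qed

lemma inner2: "(x::real^2) \<bullet> y = x$1*y$1 + x$2*y$2"
  by (simp add: inner_vec_def sum_2)

lemma perp_nth[simp]: "perp a $ 1 = - (a $ 2)" "perp a $ 2 = a $ 1"
  by (simp_all add: perp_def)

definition Cm :: "real^2 \<Rightarrow> real^2 \<Rightarrow> complex" where
  "Cm a y = Complex (a \<bullet> y) (perp a \<bullet> y)"

lemma Cm_deriv:
  assumes "(F has_derivative F') net"
  shows "((\<lambda>x. Cm a (F x)) has_derivative (\<lambda>y. Cm a (F' y))) net"
  unfolding Cm_def Complex_eq
  by (rule derivative_eq_intros assms refl | simp)+

lemma Cm_add: "Cm a (y + z) = Cm a y + Cm a z"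
  by (simp add: Cm_def complex_eq_iff inner_add_right)

lemma Cm_scale: "Cm a (c *\<^sub>R y) = of_real c * Cm a y"
  by (simp add: Cm_def complex_eq_iff)

lemma Cm_minus: "Cm a (- y) = - Cm a y"
  by (simp add: Cm_def complex_eq_iff)

lemma Cm_zero: "Cm a 0 = 0"
  by (simp add: Cm_def complex_eq_iff)

definition mu :: "real^2 \<Rightarrow> complex" where "mu u = Complex (u$1) (u$2)"

lemma Cm_v:
  assumes u12: "(u$1)^2 + (u$2)^2 = 1" and v: "v = vector [- (u $ 1), u $ 2]"
  shows "Cm v y = - (mu u * mu u) * Cm u y"
proof -
  have "v$1 = - u$1" "v$2 = u$2" using v by auto
  then show ?thesis
    unfolding Cm_def complex_eq_iff mu_def using u12
    by (simp add: inner2 power2_eq_square) algebra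
qed

lemma Cm_eq0:
  assumes u12: "(u$1)^2 + (u$2)^2 = 1" and "Cm u y = 0"
  shows "y = 0"
proof -
  have a: "u$1*y$1 + u$2*y$2 = 0" "- u$2*y$1 + u$1*y$2 = 0"
    using assms(2) by (simp_all add: Cm_def complex_eq_iff inner2)
  have "y$1 = 0" using a u12 by algebra
  moreover have "y$2 = 0" using a u12 by algebra
  ultimately show ?thesis by (simp add: vec_eq_iff forall_2)
qed

lemma X_dir:
  fixes h :: "real^2 \<Rightarrow> real^2" and h' :: "real^2 \<Rightarrow> ((real^2) \<Rightarrow>\<^sub>L (real^2))"
  assumes hd: "\<And>x. (h has_derivative blinfun_apply (h' x)) (at x)"
    and hc: "continuous_on UNIV h'"
    and supp: "\<And>y. r < norm y \<Longrightarrow> h y = 0" and r1: "r < 1"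
    and x: "norm x < 1" and w: "norm w = 1"
  shows "blinfun_apply (integral {0..2} (\<lambda>t. h' (x + t *\<^sub>R w))) w = - h x"
proof -
  have ih: "(\<lambda>t. h' (x + t *\<^sub>R w)) integrable_on {0..2}"
    by (intro integrable_continuous_interval continuous_on_compose2[OF hc] continuous_intros) auto
  have e1: "blinfun_apply (integral {0..2} (\<lambda>t. h' (x + t *\<^sub>R w))) w
      = integral {0..2} (\<lambda>t. blinfun_apply (h' (x + t *\<^sub>R w)) w)"
    by (rule blinfun_apply_integral[OF ih])
  have "((\<lambda>t. blinfun_apply (h' (x + t *\<^sub>R w)) w) has_integral
          (h (x + 2 *\<^sub>R w) - h (x + 0 *\<^sub>R w))) {0..2}"
  proof (rule fundamental_theorem_of_calculus[where f="\<lambda>t. h (x + t *\<^sub>R w)"])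
    fix t :: real
    have "((\<lambda>t. h (x + t *\<^sub>R w)) has_derivative
            (\<lambda>s. blinfun_apply (h' (x + t *\<^sub>R w)) (0 + s *\<^sub>R w))) (at t within {0..2})"
      using has_derivative_compose[OF has_derivative_add[OF has_derivative_const
          has_derivative_scaleR_left[OF has_derivative_ident]] hd]
      by (simp add: o_def)
    then show "((\<lambda>t. h (x + t *\<^sub>R w)) has_vector_derivative
            blinfun_apply (h' (x + t *\<^sub>R w)) w) (at t within {0..2})"
      by (simp add: has_vector_derivative_def blinfun.scaleR_right)
  qed simp
  moreover have "h (x + 2 *\<^sub>R w) = 0"
  proof (rule supp)
    have "norm (2 *\<^sub>R w) - norm x \<le> norm (2 *\<^sub>R w + x)" by (rule norm_diff_ineq)
    then show "r < norm (x + 2 *\<^sub>R w)" using w x r1 by (simp add: add.commute)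
  qed
  ultimately show ?thesis using e1 by (simp add: integral_unique)
qed

lemma main_lemma:
  fixes h :: "real^2 \<Rightarrow> real^2" and h' :: "real^2 \<Rightarrow> ((real^2) \<Rightarrow>\<^sub>L (real^2))"
    and \<alpha> r :: real and u v :: "real^2"
  assumes hd: "\<And>x. (h has_derivative blinfun_apply (h' x)) (at x)"
    and hc: "continuous_on UNIV h'"
    and supp: "\<And>y. r < norm y \<Longrightarrow> h y = 0" and r1: "r < 1" and r0: "0 \<le> r"
    and a0: "\<alpha> \<noteq> 0" and un: "norm u = 1" and vdef: "v = vector [- (u $ 1), u $ 2]"
    and u12: "u $ 1 * u $ 2 \<noteq> 0"
    and data: "\<And>x. x \<in> ball 0 1 \<Longrightarrow>
       Cm u (integral {0..2} (\<lambda>t. h (x + t *\<^sub>R u))) =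
       of_real \<alpha> * Cm v (integral {0..2} (\<lambda>t. h (x + t *\<^sub>R v)))"
  shows "h y = 0"
proof -
  define X where "X w x = integral {0..2} (\<lambda>t. h (x + t *\<^sub>R w))" for w x
  define DX where "DX w x = integral {0..2} (\<lambda>t. h' (x + t *\<^sub>R w))" for w x
  have v1: "v$1 = - u$1" and v2: "v$2 = u$2" using vdef by auto
  have uu: "(u$1)^2 + (u$2)^2 = 1"
    using un by (metis dot_square_norm inner2 power2_eq_square power_one)
  have vn: "norm v = 1"
    using uu by (simp add: norm_eq_sqrt_inner inner2 v1 v2 power2_eq_square)
  have Xd: "\<And>w x. (X w has_derivative blinfun_apply (DX w x)) (at x)"
    unfolding X_def DX_def by (rule X_deriv[OF hd hc])
  have Xdir: "\<And>w x. norm x < 1 \<Longrightarrow> norm w = 1 \<Longrightarrow> blinfun_apply (DX w x) w = - h x"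
    unfolding DX_def by (rule X_dir[OF hd hc supp r1])
  define G where "G x = Cm u (X u x)" for x
  define G2 where "G2 x = Cm v (X v x)" for x
  have Gd: "\<And>x. (G has_derivative (\<lambda>y. Cm u (DX u x y))) (at x)"
    unfolding G_def by (rule Cm_deriv[OF Xd])
  have G2d: "\<And>x. (G2 has_derivative (\<lambda>y. Cm v (DX v x y))) (at x)"
    unfolding G2_def by (rule Cm_deriv[OF Xd])
  have GG2: "\<And>x. x \<in> ball 0 1 \<Longrightarrow> G x = of_real \<alpha> * G2 x"
    unfolding G_def G2_def X_def by (rule data)
  have Dv: "Cm u (DX u x y) = of_real \<alpha> * Cm v (DX v x y)" if x: "x \<in> ball 0 1" for x y
  proof -
    have "((\<lambda>x. of_real \<alpha> * G2 x) has_derivative (\<lambda>y. of_real \<alpha> * Cm v (DX v x y))) (at x)"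
      by (rule has_derivative_mult_right[OF G2d])
    then have "(G has_derivative (\<lambda>y. of_real \<alpha> * Cm v (DX v x y))) (at x)"
      by (rule has_derivative_transform_within_open[where s="ball 0 1"]) (use x GG2 in auto)
    from has_derivative_unique[OF Gd this] show ?thesis by metis
  qed
  define k where "k = - of_real \<alpha> * (mu u * mu u)"
  have Imk: "Im k \<noteq> 0"
    using a0 u12 by (simp add: k_def mu_def)
  define \<Phi> where "\<Phi> z = (Re z - Re k * (Im z / Im k)) *\<^sub>R u + (Im z / Im k) *\<^sub>R v" for z
  have \<Phi>lin: "linear \<Phi>"
    by (rule linearI) (simp_all add: \<Phi>_def algebra_simps add_divide_distrib scaleR_add_left)
  have \<Phi>d: "(\<Phi> has_derivative \<Phi>) F" for F
    using \<Phi>lin by (simp add: linear_imp_has_derivative)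
  have \<Phi>c: "continuous_on UNIV \<Phi>"
    using \<Phi>lin linear_continuous_on linear_linear by blast
  define H where "H z = G (\<Phi> z)" for z
  define \<Omega> where "\<Omega> = {z. norm (\<Phi> z) < 1}"
  have Hd: "(H has_field_derivative (- Cm u (h (\<Phi> z)))) (at z)" if z: "z \<in> \<Omega>" for z
  proof -
    let ?x = "\<Phi> z"
    have x: "?x \<in> ball 0 1" "norm ?x < 1" using z by (auto simp: \<Omega>_def)
    have "(H has_derivative (\<lambda>w. Cm u (DX u ?x (\<Phi> w)))) (at z)"
      unfolding H_def using has_derivative_compose[OF \<Phi>d Gd] by (simp add: o_def)
    moreover have "Cm u (DX u ?x (\<Phi> w)) = (- Cm u (h ?x)) * w" for w
    proof -
      define b where "b = Im w / Im k"
      define a where "a = Re w - Re k * b"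
      have ab: "of_real a + of_real b * k = w"
        using Imk by (simp add: complex_eq_iff a_def b_def)
      have "DX u ?x (\<Phi> w) = a *\<^sub>R DX u ?x u + b *\<^sub>R DX u ?x v"
        by (simp add: \<Phi>_def a_def b_def blinfun.add_right blinfun.scaleR_right)
      then have "Cm u (DX u ?x (\<Phi> w)) = of_real a * Cm u (DX u ?x u) + of_real b * Cm u (DX u ?x v)"
        by (simp add: Cm_add Cm_scale)
      also have "Cm u (DX u ?x u) = - Cm u (h ?x)"
        using Xdir[OF x(2) un] by (simp add: Cm_minus)
      also have "Cm u (DX u ?x v) = k * (- Cm u (h ?x))"
        using Dv[OF x(1)] Xdir[OF x(2) vn] Cm_v[OF uu vdef] by (simp add: k_def Cm_minus)
      finally have "Cm u (DX u ?x (\<Phi> w)) = (- Cm u (h ?x)) * (of_real a + of_real b * k)"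
        by (simp add: algebra_simps)
      then show ?thesis using ab by simp
    qed
    ultimately have "(H has_derivative (\<lambda>w. (- Cm u (h ?x)) * w)) (at z)"
      by (simp add: mult.commute)
    then show ?thesis
      unfolding has_field_derivative_def by (rule has_derivative_eq_rhs) auto
  qed
  have \<Omega>open: "open \<Omega>"
    unfolding \<Omega>_def by (intro open_Collect_less continuous_intros continuous_on_compose2[OF \<Phi>c]) auto
  have \<Omega>conn: "connected \<Omega>"
  proof -
    have "\<Omega> = \<Phi> -` ball 0 1" by (auto simp: \<Omega>_def)
    then have "convex \<Omega>" using convex_linear_vimage[OF \<Phi>lin convex_ball] by simp
    then show ?thesis by (rule convex_connected)
  qed
  have Hhol: "H holomorphic_on \<Omega>"
    unfolding holomorphic_on_def field_differentiable_def
    using Hd by (meson has_field_derivative_at_within)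
  define U where "U = \<Omega> \<inter> {z. r < \<Phi> z \<bullet> u}"
  have Uopen: "open U"
    unfolding U_def by (intro open_Int \<Omega>open open_Collect_less continuous_intros continuous_on_compose2[OF \<Phi>c]) auto
  define \<rho> where "\<rho> = (1 + r) / 2"
  have \<Phi>\<rho>: "\<Phi> (of_real \<rho>) = \<rho> *\<^sub>R u" by (simp add: \<Phi>_def)
  have z0U: "of_real \<rho> \<in> U"
    unfolding U_def \<Omega>_def using \<Phi>\<rho> un r0 r1
    by (simp add: \<rho>_def dot_square_norm)
  have H0: "H z = 0" if "z \<in> U" for z
  proof -
    have "\<And>t. t \<in> {0..2} \<Longrightarrow> h (\<Phi> z + t *\<^sub>R u) = 0"
    proof (rule supp)
      fix t :: real assume t: "t \<in> {0..2}"
      have "r < (\<Phi> z + t *\<^sub>R u) \<bullet> u"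
        using that t un by (simp add: U_def inner_add_left dot_square_norm)
      also have "\<dots> \<le> norm (\<Phi> z + t *\<^sub>R u)"
        using norm_cauchy_schwarz[of "\<Phi> z + t *\<^sub>R u" u] un by simp
      finally show "r < norm (\<Phi> z + t *\<^sub>R u)" .
    qed
    then have "X u (\<Phi> z) = 0"
      unfolding X_def by (metis (no_types, lifting) integral_cong integral_0)
    then show ?thesis by (simp add: H_def G_def Cm_zero)
  qed
  have HO: "H z = 0" if "z \<in> \<Omega>" for z
  proof (rule analytic_continuation[OF Hhol \<Omega>open \<Omega>conn _ _ _ H0 that])
    show "U \<subseteq> \<Omega>" by (auto simp: U_def)
    show "of_real \<rho> \<in> \<Omega>" using z0U by (auto simp: U_def)
    show "of_real \<rho> islimpt U" using z0U Uopen by (simp add: interior_open interior_limit_point)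
  qed
  have hz: "h (\<Phi> z) = 0" if "z \<in> \<Omega>" for z
  proof -
    have "((\<lambda>_. 0) has_field_derivative (- Cm u (h (\<Phi> z)))) (at z)"
      by (rule has_field_derivative_transform_within_open[OF Hd[OF that] \<Omega>open that]) (use HO in auto)
    then have "- Cm u (h (\<Phi> z)) = 0"
      using DERIV_unique[OF _ DERIV_const] by blast
    then show ?thesis using Cm_eq0[OF uu] by simp
  qed
  show "h y = 0"
  proof (cases "norm y < 1")
    case False then show ?thesis using supp r1 by simp
  next
    case True
    define s where "s = (y$1 / u$1 + y$2 / u$2) / 2"
    define t where "t = (y$2 / u$2 - y$1 / u$1) / 2"
    define z where "z = Complex (s + Re k * t) (Im k * t)"
    have "\<Phi> z = y"
      using Imk u12 by (simp add: \<Phi>_def z_def s_def t_def vec_eq_iff forall_2 v1 v2 field_simps)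
    moreover have "z \<in> \<Omega>" using True calculation by (simp add: \<Omega>_def)
    ultimately show ?thesis using hz by metis
  qed
qed

lemma supp_radius:
  assumes "Cc2_disc f"
  shows "\<exists>r. 0 \<le> r \<and> r < 1 \<and> (\<forall>y. r < norm y \<longrightarrow> f y = 0)"
proof -
  define K where "K = closure {x. f x \<noteq> 0}"
  have KK: "C2_field f \<and> compact K \<and> K \<subseteq> ball 0 1"
    using assms unfolding K_def by (simp only: Cc2_disc_def)
  have Kc: "compact K" using KK by (elim conjE)
  have Kb: "K \<subseteq> ball 0 1" using KK by (elim conjE)
  have fK: "f y = 0" if "y \<notin> K" for y
  proof (rule ccontr)
    assume "f y \<noteq> 0"
    then have "y \<in> {x. f x \<noteq> 0}" by simp
    then have "y \<in> K" unfolding K_def by (rule subsetD[OF closure_subset])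
    then show False using that by blast
  qed
  show ?thesis
  proof (cases "K = {}")
    case True
    have "\<forall>y. 0 < norm y \<longrightarrow> f y = 0" using fK True by blast
    then show ?thesis by (intro exI[of _ 0]) simp
  next
    case False
    have "compact (norm ` K)" by (intro compact_continuous_image continuous_intros Kc)
    moreover have "norm ` K \<noteq> {}" using False by blast
    ultimately obtain s where s: "s \<in> norm ` K" "\<And>t. t \<in> norm ` K \<Longrightarrow> t \<le> s"
      using compact_attains_sup[of "norm ` K"] by metis
    then obtain k where k: "k \<in> K" "s = norm k" by blast
    have s1: "s < 1" using k Kb by auto
    have s0: "0 \<le> s" using k by simp
    have "f y = 0" if "s < norm y" for y
    proof (rule fK)
      show "y \<notin> K"
      proof
        assume "y \<in> K"
        then have "norm y \<le> s" using s(2) by blast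
        then show False using that by simp
      qed
    qed
    then show ?thesis using s0 s1 by blast
  qed
qed

lemma ray_int:
  fixes \<phi> :: "real^2 \<Rightarrow> real^2"
  assumes c: "continuous_on UNIV \<phi>" and supp: "\<And>y. r < norm y \<Longrightarrow> \<phi> y = 0" and r1: "r < 1"
    and x: "norm x < 1" and w: "norm w = 1"
  shows "integral {0..} (\<lambda>t. a \<bullet> \<phi> (x + t *\<^sub>R w)) = a \<bullet> integral {0..2} (\<lambda>t. \<phi> (x + t *\<^sub>R w))"
proof -
  have "integral {0..} (\<lambda>t. a \<bullet> \<phi> (x + t *\<^sub>R w))
      = integral {0..} (\<lambda>t. if t \<in> {0..2} then a \<bullet> \<phi> (x + t *\<^sub>R w) else 0)"
  proof (rule integral_cong)
    fix t :: real assume t: "t \<in> {0..}"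
    show "a \<bullet> \<phi> (x + t *\<^sub>R w) = (if t \<in> {0..2} then a \<bullet> \<phi> (x + t *\<^sub>R w) else 0)"
    proof (cases "t \<le> 2")
      case False
      have "norm (t *\<^sub>R w) - norm x \<le> norm (t *\<^sub>R w + x)" by (rule norm_diff_ineq)
      then have "r < norm (x + t *\<^sub>R w)" using False w x r1 t by (simp add: add.commute)
      then show ?thesis using supp by simp
    qed (use t in auto)
  qed
  also have "\<dots> = integral {0..2} (\<lambda>t. a \<bullet> \<phi> (x + t *\<^sub>R w))"
    using integral_restrict_Int[where S="{0..2}" and T="{0..}" and f="\<lambda>t. a \<bullet> \<phi> (x + t *\<^sub>R w)"]
    by (simp add: Int_absorb2)
  also have "\<dots> = a \<bullet> integral {0..2} (\<lambda>t. \<phi> (x + t *\<^sub>R w))"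
  proof -
    have "(\<lambda>t. \<phi> (x + t *\<^sub>R w)) integrable_on {0..2}"
      by (intro integrable_continuous_interval continuous_on_compose2[OF c] continuous_intros) auto
    from integral_linear[OF this bounded_linear_inner_right[of a]] show ?thesis by (simp add: o_def)
  qed
  finally show ?thesis .
qed

theorem theorem7p2:
  fixes \<alpha> :: real and u v :: "real^2" and f g :: "real^2 \<Rightarrow> real^2"
  assumes "\<alpha> \<noteq> 0"
    and "norm u = 1"
    and "v = vector [- (u $ 1), u $ 2]"
    and "u $ 1 * u $ 2 \<noteq> 0"
    and "Cc2_disc f" and "Cc2_disc g"
    and "\<forall>x\<in>ball 0 1. L_op \<alpha> u v f x = L_op \<alpha> u v g x"
    and "\<forall>x\<in>ball 0 1. T_op \<alpha> u v f x = T_op \<alpha> u v g x"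
  shows "f = g"
proof -
  note a0 = assms(1) and un = assms(2) and vdef = assms(3) and u12 = assms(4)
  have v1: "v$1 = - u$1" and v2: "v$2 = u$2" using vdef by auto
  have uu: "(u$1)^2 + (u$2)^2 = 1"
    using un by (metis dot_square_norm inner2 power2_eq_square power_one)
  have vn: "norm v = 1"
    using uu by (simp add: norm_eq_sqrt_inner inner2 v1 v2 power2_eq_square)
  have "C2_field f" using assms(5) unfolding Cc2_disc_def by simp
  then obtain f' f'' where fd0: "\<forall>x. (f has_derivative blinfun_apply (f' x)) (at x)"
    and fd20: "\<forall>x. (f' has_derivative blinfun_apply (f'' x)) (at x)"
    unfolding C2_field_def by (elim exE conjE)
  have "C2_field g" using assms(6) unfolding Cc2_disc_def by simp
  then obtain g' g'' where gd0: "\<forall>x. (g has_derivative blinfun_apply (g' x)) (at x)"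
    and gd20: "\<forall>x. (g' has_derivative blinfun_apply (g'' x)) (at x)"
    unfolding C2_field_def by (elim exE conjE)
  have fd: "\<And>x. (f has_derivative blinfun_apply (f' x)) (at x)" using fd0 by blast
  have fd2: "\<And>x. (f' has_derivative blinfun_apply (f'' x)) (at x)" using fd20 by blast
  have gd: "\<And>x. (g has_derivative blinfun_apply (g' x)) (at x)" using gd0 by blast
  have gd2: "\<And>x. (g' has_derivative blinfun_apply (g'' x)) (at x)" using gd20 by blast
  have fc: "continuous_on UNIV f" using fd
    by (meson continuous_on_eq_continuous_within has_derivative_continuous)
  have gc: "continuous_on UNIV g" using gd
    by (meson continuous_on_eq_continuous_within has_derivative_continuous)
  have f'c: "continuous_on UNIV f'" using fd2
    by (meson continuous_on_eq_continuous_within has_derivative_continuous)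
  have g'c: "continuous_on UNIV g'" using gd2
    by (meson continuous_on_eq_continuous_within has_derivative_continuous)
  obtain rf where rf: "0 \<le> rf" "rf < 1" "\<And>y. rf < norm y \<Longrightarrow> f y = 0"
    using supp_radius[OF assms(5)] by blast
  obtain rg where rg: "0 \<le> rg" "rg < 1" "\<And>y. rg < norm y \<Longrightarrow> g y = 0"
    using supp_radius[OF assms(6)] by blast
  define r where "r = max rf rg"
  define h where "h x = f x - g x" for x
  define h' where "h' x = f' x - g' x" for x
  have hd: "(h has_derivative blinfun_apply (h' x)) (at x)" for x
    unfolding h_def h'_def
    by (rule has_derivative_eq_rhs[OF has_derivative_diff[OF fd gd]]) (simp add: fun_eq_iff blinfun.diff_left)
  have hc: "continuous_on UNIV h'"
    unfolding h'_def by (intro continuous_intros f'c g'c)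
  have hs: "h y = 0" if "r < norm y" for y
  proof -
    have "rf < norm y" "rg < norm y" using that by (auto simp: r_def)
    then show ?thesis using rf(3) rg(3) by (simp add: h_def)
  qed
  define Xf where "Xf w x = integral {0..2} (\<lambda>t. f (x + t *\<^sub>R w))" for w x
  define Xg where "Xg w x = integral {0..2} (\<lambda>t. g (x + t *\<^sub>R w))" for w x
  have Xh: "integral {0..2} (\<lambda>t. h (x + t *\<^sub>R w)) = Xf w x - Xg w x" for w x
  proof -
    have "(\<lambda>t. f (x + t *\<^sub>R w)) integrable_on {0..2}"
      by (intro integrable_continuous_interval continuous_on_compose2[OF fc] continuous_intros) auto
    moreover have "(\<lambda>t. g (x + t *\<^sub>R w)) integrable_on {0..2}"
      by (intro integrable_continuous_interval continuous_on_compose2[OF gc] continuous_intros) auto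
    ultimately show ?thesis unfolding h_def Xf_def Xg_def by (rule integral_diff)
  qed
  have data: "Cm u (integral {0..2} (\<lambda>t. h (x + t *\<^sub>R u))) =
       of_real \<alpha> * Cm v (integral {0..2} (\<lambda>t. h (x + t *\<^sub>R v)))" if x: "x \<in> ball 0 1" for x
  proof -
    have xn: "norm x < 1" using x by simp
    have rif: "\<And>a w. norm w = 1 \<Longrightarrow> integral {0..} (\<lambda>t. a \<bullet> f (x + t *\<^sub>R w)) = a \<bullet> Xf w x"
      unfolding Xf_def by (rule ray_int[OF fc rf(3) rf(2) xn])
    have rig: "\<And>a w. norm w = 1 \<Longrightarrow> integral {0..} (\<lambda>t. a \<bullet> g (x + t *\<^sub>R w)) = a \<bullet> Xg w x"
      unfolding Xg_def by (rule ray_int[OF gc rg(3) rg(2) xn])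
    have L: "- (u \<bullet> Xf u x) + \<alpha> * (v \<bullet> Xf v x) = - (u \<bullet> Xg u x) + \<alpha> * (v \<bullet> Xg v x)"
    proof -
      have "L_op \<alpha> u v f x = L_op \<alpha> u v g x" using assms(7) x by blast
      then show ?thesis unfolding L_op_def by (simp only: rif[OF un] rif[OF vn] rig[OF un] rig[OF vn])
    qed
    have T: "- (perp u \<bullet> Xf u x) + \<alpha> * (perp v \<bullet> Xf v x) = - (perp u \<bullet> Xg u x) + \<alpha> * (perp v \<bullet> Xg v x)"
    proof -
      have "T_op \<alpha> u v f x = T_op \<alpha> u v g x" using assms(8) x by blast
      then show ?thesis unfolding T_op_def by (simp only: rif[OF un] rif[OF vn] rig[OF un] rig[OF vn])
    qed
    show ?thesis
      unfolding Xh Cm_def complex_eq_iff using L T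
      by (simp add: inner_diff_right algebra_simps)
  qed
  have r1: "r < 1" and r0: "0 \<le> r" using rf rg by (auto simp: r_def)
  have "h y = 0" for y
    by (rule main_lemma[OF hd hc hs r1 r0 a0 un vdef u12 data])
  then have "f y = g y" for y using h_def[of y] by simp
  then show ?thesis by (rule ext)
qed

end
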